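(* Let $V$ and $W$ be pfd $B$-persistence modules, decomposed as $V\cong\bigoplus_{\mathcal{X}}V^{\mathcal{X}}$ and $W\cong\bigoplus_{\mathcal{X}}W^{\mathcal{X}}$, with $\mathcal{X}$ ranging over $\{\mathcal{U},\mathcal{D},\mathcal{B},\mathcal{L},\mathcal{R}\}$. For every $\epsilon\ge0$ the following are equivalent: - (i) $V$ and $W$ are $\Lambda_\epsilon$-interleaved; - (ii) $V^{\mathcal{X}}$ and $W^{\mathcal{X}}$ are $\Lambda_\epsilon$-interleaved for each $\mathcal{X}\in\{\mathcal{U},\mathcal{D},\mathcal{B},\mathcal{L},\mathcal{R}\}$.
   Context: Let $k$ be a field. The bipath poset $B$ has underlying set $(\mathbb{R}\times\{1,2\})\sqcup\{-\infty,+\infty\}$. Its order is: $x\le y$ iff $x=-\infty$, or $y=+\infty$, or $x=(s,i)$, $y=(t,i)$ with the same $i$ and $s\le t$. A $B$-persistence module is a functor from $B$ (as a category) to $k$-vector spaces; it is pfd if all spaces are finite-dimensional. An interval of $B$ is a nonempty convex and connected subset (convex: $p,q\in I$, $p\le r\le q$ imply $r\in I$; connected: any two elements are joined by a finite sequence in $I$ with consecutive ones comparable). $k_I$ denotes the interval module. Every pfd $B$-module decomposes uniquely (up to isomorphism and permutation) into interval modules. The types of intervals are: - $\mathcal{U}$: intervals contained in $\mathbb{R}\times\{1\}$; - $\mathcal{D}$: intervals contained in $\mathbb{R}\times\{2\}$; - $\mathcal{B}=\{B\}$; - $\mathcal{L}$: intervals $\neq B$ containing $-\infty$; - $\mathcal{R}$: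 intervals $\neq B$ containing $+\infty$. $V^{\mathcal{X}}$ denotes the direct sum of those interval summands of $V$ whose interval lies in $\mathcal{X}$; it is well defined up to isomorphism. For $\epsilon\ge0$, $\Lambda_\epsilon\colon B\to B$ sends $(r,i)\mapsto(r+\epsilon,i)$ and fixes $\pm\infty$. Then: - $V(\epsilon)_b=V_{\Lambda_\epsilon b}$ and $V(\epsilon)(b,b')=V(\Lambda_\epsilon b,\Lambda_\epsilon b')$; for a morphism $\phi$, $\phi(\epsilon)$ has components $\phi_{\Lambda_\epsilon b}$; - $V_{0\to\epsilon}\colon V\to V(\epsilon)$ has components $V(b,\Lambda_\epsilon b)$; - $V$ and $W$ are $\Lambda_\epsilon$-interleaved if there are $\alpha\colon V\to W(\epsilon)$ and $\beta\colon W\to V(\epsilon)$ with $\beta(\epsilon)\alpha=V_{0\to2\epsilon}$ and $\alpha(\epsilon)\beta=W_{0\to2\epsilon}$. *)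

theory Defs
  imports Complex_Main
begin

datatype lane = L1 | L2

datatype bpt = NInf | Pt real lane | PInf

definition ble :: "bpt \<Rightarrow> bpt \<Rightarrow> bool" where
  "ble x y \<longleftrightarrow> x = NInf \<or> y = PInf \<or> (\<exists>s t i. x = Pt s i \<and> y = Pt t i \<and> s \<le> t)"

fun lam :: "real \<Rightarrow> bpt \<Rightarrow> bpt" where
  "lam e NInf = NInf"
| "lam e (Pt r i) = Pt (r + e) i"
| "lam e PInf = PInf"

definition convex_B :: "bpt set \<Rightarrow> bool" where
  "convex_B I \<longleftrightarrow> (\<forall>p\<in>I. \<forall>q\<in>I. \<forall>r. ble p r \<and> ble r q \<longrightarrow> r \<in> I)"

definition connected_B :: "bpt set \<Rightarrow> bool" where
  "connected_B I \<longleftrightarrow> (\<forall>p\<in>I. \<forall>q\<in>I. \<exists>xs. xs \<noteq> [] \<and> hd xs = p \<and> last xs = q \<and> set xs \<subseteq> I \<and>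
      (\<forall>i. Suc i < length xs \<longrightarrow> ble (xs ! i) (xs ! Suc i) \<or> ble (xs ! Suc i) (xs ! i)))"

definition interval_B :: "bpt set \<Rightarrow> bool" where
  "interval_B I \<longleftrightarrow> I \<noteq> {} \<and> convex_B I \<and> connected_B I"

datatype itype = TU | TD | TB | TL | TR

fun in_itype :: "itype \<Rightarrow> bpt set \<Rightarrow> bool" where
  "in_itype TU I \<longleftrightarrow> interval_B I \<and> I \<subseteq> range (\<lambda>r. Pt r L1)"
| "in_itype TD I \<longleftrightarrow> interval_B I \<and> I \<subseteq> range (\<lambda>r. Pt r L2)"
| "in_itype TB I \<longleftrightarrow> I = UNIV"
| "in_itype TL I \<longleftrightarrow> interval_B I \<and> I \<noteq> UNIV \<and> NInf \<in> I"
| "in_itype TR I \<longleftrightarrow> interval_B I \<and> I \<noteq> UNIV \<and> PInf \<in> I"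

text \<open>A B-persistence module over the field 'k (scalar multiplication s on the ambient
  k-vector space 'v) is given by subspaces Sp b of 'v and structure maps Mp b b' for b \<le> b'
  (the values of Mp on non-comparable pairs, and outside Sp b, are irrelevant).\<close>

definition lin_on :: "('k::field \<Rightarrow> 'v::ab_group_add \<Rightarrow> 'v) \<Rightarrow> ('k \<Rightarrow> 'w::ab_group_add \<Rightarrow> 'w)
    \<Rightarrow> 'v set \<Rightarrow> ('v \<Rightarrow> 'w) \<Rightarrow> bool" where
  "lin_on s1 s2 A f \<longleftrightarrow> (\<forall>x\<in>A. \<forall>y\<in>A. f (x + y) = f x + f y) \<and> (\<forall>c. \<forall>x\<in>A. f (s1 c x) = s2 c (f x))"

definition pmod :: "('k::field \<Rightarrow> 'v::ab_group_add \<Rightarrow> 'v) \<Rightarrow> (bpt \<Rightarrow> 'v set)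
    \<Rightarrow> (bpt \<Rightarrow> bpt \<Rightarrow> 'v \<Rightarrow> 'v) \<Rightarrow> bool" where
  "pmod s Sp Mp \<longleftrightarrow> vector_space s \<and> (\<forall>b. module.subspace s (Sp b))
     \<and> (\<forall>b b'. ble b b' \<longrightarrow> lin_on s s (Sp b) (Mp b b') \<and> Mp b b' ` Sp b \<subseteq> Sp b')
     \<and> (\<forall>b. \<forall>x\<in>Sp b. Mp b b x = x)
     \<and> (\<forall>b b' b''. ble b b' \<longrightarrow> ble b' b'' \<longrightarrow> (\<forall>x\<in>Sp b. Mp b' b'' (Mp b b' x) = Mp b b'' x))"

definition pfd :: "('k::field \<Rightarrow> 'v::ab_group_add \<Rightarrow> 'v) \<Rightarrow> (bpt \<Rightarrow> 'v set)
    \<Rightarrow> (bpt \<Rightarrow> bpt \<Rightarrow> 'v \<Rightarrow> 'v) \<Rightarrow> bool" where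
  "pfd s Sp Mp \<longleftrightarrow> pmod s Sp Mp \<and> (\<forall>b. \<exists>F. finite F \<and> F \<subseteq> Sp b \<and> module.span s F = Sp b)"

definition morph :: "('k::field \<Rightarrow> 'v::ab_group_add \<Rightarrow> 'v) \<Rightarrow> (bpt \<Rightarrow> 'v set) \<Rightarrow> (bpt \<Rightarrow> bpt \<Rightarrow> 'v \<Rightarrow> 'v)
    \<Rightarrow> ('k \<Rightarrow> 'w::ab_group_add \<Rightarrow> 'w) \<Rightarrow> (bpt \<Rightarrow> 'w set) \<Rightarrow> (bpt \<Rightarrow> bpt \<Rightarrow> 'w \<Rightarrow> 'w)
    \<Rightarrow> (bpt \<Rightarrow> 'v \<Rightarrow> 'w) \<Rightarrow> bool" where
  "morph s1 Sp1 Mp1 s2 Sp2 Mp2 \<phi> \<longleftrightarrow>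
     (\<forall>b. lin_on s1 s2 (Sp1 b) (\<phi> b) \<and> \<phi> b ` Sp1 b \<subseteq> Sp2 b)
     \<and> (\<forall>b b'. ble b b' \<longrightarrow> (\<forall>x\<in>Sp1 b. \<phi> b' (Mp1 b b' x) = Mp2 b b' (\<phi> b x)))"

definition mod_iso :: "('k::field \<Rightarrow> 'v::ab_group_add \<Rightarrow> 'v) \<Rightarrow> (bpt \<Rightarrow> 'v set) \<Rightarrow> (bpt \<Rightarrow> bpt \<Rightarrow> 'v \<Rightarrow> 'v)
    \<Rightarrow> ('k \<Rightarrow> 'w::ab_group_add \<Rightarrow> 'w) \<Rightarrow> (bpt \<Rightarrow> 'w set) \<Rightarrow> (bpt \<Rightarrow> bpt \<Rightarrow> 'w \<Rightarrow> 'w) \<Rightarrow> bool" where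
  "mod_iso s1 Sp1 Mp1 s2 Sp2 Mp2 \<longleftrightarrow> (\<exists>\<phi> \<psi>. morph s1 Sp1 Mp1 s2 Sp2 Mp2 \<phi> \<and> morph s2 Sp2 Mp2 s1 Sp1 Mp1 \<psi>
     \<and> (\<forall>b. (\<forall>x\<in>Sp1 b. \<psi> b (\<phi> b x) = x) \<and> (\<forall>y\<in>Sp2 b. \<phi> b (\<psi> b y) = y)))"

text \<open>The interval module k_I, realised on the ambient space k itself.\<close>
definition ivSp :: "bpt set \<Rightarrow> bpt \<Rightarrow> 'k::field set" where
  "ivSp I b = (if b \<in> I then UNIV else {0})"

definition ivMp :: "bpt set \<Rightarrow> bpt \<Rightarrow> bpt \<Rightarrow> 'k::field \<Rightarrow> 'k" where
  "ivMp I b b' x = (if b \<in> I \<and> b' \<in> I then x else 0)"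

definition shSp :: "real \<Rightarrow> (bpt \<Rightarrow> 'v set) \<Rightarrow> bpt \<Rightarrow> 'v set" where
  "shSp e Sp b = Sp (lam e b)"

definition shMp :: "real \<Rightarrow> (bpt \<Rightarrow> bpt \<Rightarrow> 'v \<Rightarrow> 'v) \<Rightarrow> bpt \<Rightarrow> bpt \<Rightarrow> 'v \<Rightarrow> 'v" where
  "shMp e Mp b b' = Mp (lam e b) (lam e b')"

definition interleaved :: "real \<Rightarrow> ('k::field \<Rightarrow> 'v::ab_group_add \<Rightarrow> 'v) \<Rightarrow> (bpt \<Rightarrow> 'v set) \<Rightarrow> (bpt \<Rightarrow> bpt \<Rightarrow> 'v \<Rightarrow> 'v)
    \<Rightarrow> ('k \<Rightarrow> 'w::ab_group_add \<Rightarrow> 'w) \<Rightarrow> (bpt \<Rightarrow> 'w set) \<Rightarrow> (bpt \<Rightarrow> bpt \<Rightarrow> 'w \<Rightarrow> 'w) \<Rightarrow> bool" where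
  "interleaved e s1 Sp1 Mp1 s2 Sp2 Mp2 \<longleftrightarrow>
    (\<exists>\<alpha> \<beta>. morph s1 Sp1 Mp1 s2 (shSp e Sp2) (shMp e Mp2) \<alpha>
         \<and> morph s2 Sp2 Mp2 s1 (shSp e Sp1) (shMp e Mp1) \<beta>
         \<and> (\<forall>b. \<forall>x\<in>Sp1 b. \<beta> (lam e b) (\<alpha> b x) = Mp1 b (lam (2 * e) b) x)
         \<and> (\<forall>b. \<forall>y\<in>Sp2 b. \<alpha> (lam e b) (\<beta> b y) = Mp2 b (lam (2 * e) b) y))"

definition submod :: "('k::field \<Rightarrow> 'v::ab_group_add \<Rightarrow> 'v) \<Rightarrow> (bpt \<Rightarrow> 'v set) \<Rightarrow> (bpt \<Rightarrow> bpt \<Rightarrow> 'v \<Rightarrow> 'v)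
    \<Rightarrow> (bpt \<Rightarrow> 'v set) \<Rightarrow> bool" where
  "submod s Sp Mp S \<longleftrightarrow> (\<forall>b. module.subspace s (S b) \<and> S b \<subseteq> Sp b)
     \<and> (\<forall>b b'. ble b b' \<longrightarrow> Mp b b' ` S b \<subseteq> S b')"

text \<open>(Sp, Mp) is the internal direct sum of the interval submodules N j (j \<in> J), where
  N j is isomorphic to the interval module k_{Iv j}.\<close>
definition interval_decomp :: "('k::field \<Rightarrow> 'v::ab_group_add \<Rightarrow> 'v) \<Rightarrow> (bpt \<Rightarrow> 'v set) \<Rightarrow> (bpt \<Rightarrow> bpt \<Rightarrow> 'v \<Rightarrow> 'v)
    \<Rightarrow> 'j set \<Rightarrow> ('j \<Rightarrow> bpt \<Rightarrow> 'v set) \<Rightarrow> ('j \<Rightarrow> bpt set) \<Rightarrow> bool" where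
  "interval_decomp s Sp Mp J N Iv \<longleftrightarrow>
     (\<forall>j\<in>J. interval_B (Iv j) \<and> submod s Sp Mp (N j)
            \<and> mod_iso s (N j) Mp ((*) :: 'k \<Rightarrow> 'k \<Rightarrow> 'k) (ivSp (Iv j)) (ivMp (Iv j)))
     \<and> (\<forall>b. Sp b = module.span s (\<Union>j\<in>J. N j b))
     \<and> (\<forall>b F x. finite F \<longrightarrow> F \<subseteq> J \<longrightarrow> (\<forall>j\<in>F. x j \<in> N j b) \<longrightarrow> (\<Sum>j\<in>F. x j) = 0
             \<longrightarrow> (\<forall>j\<in>F. x j = 0))"

text \<open>V^X: the (internal) direct sum of the summands whose interval is of type X.\<close>
definition partSp :: "('k::field \<Rightarrow> 'v::ab_group_add \<Rightarrow> 'v) \<Rightarrow> 'j set \<Rightarrow> ('j \<Rightarrow> bpt \<Rightarrow> 'v set)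
    \<Rightarrow> ('j \<Rightarrow> bpt set) \<Rightarrow> itype \<Rightarrow> bpt \<Rightarrow> 'v set" where
  "partSp s J N Iv X b = module.span s (\<Union>j\<in>{j\<in>J. in_itype X (Iv j)}. N j b)"

end

theory Submission
  imports Defs
begin


lemma lin_on_zero:
  assumes "lin_on s1 s2 A f" "(0::'v::ab_group_add) \<in> A"
  shows "f 0 = (0::'w::ab_group_add)"
proof -
  have "f (0 + 0) = f 0 + f 0" using assms unfolding lin_on_def by blast
  then show ?thesis by simp
qed

lemma lin_on_sum:
  assumes "lin_on s1 s2 A f" "module.subspace s1 A" "finite F" "\<forall>i\<in>F. g i \<in> A"
    "module s1"
  shows "f (\<Sum>i\<in>F. g i) = (\<Sum>i\<in>F. f (g i))"
  using assms(3,4)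
proof (induction F rule: finite_induct)
  case empty
  then show ?case using lin_on_zero[OF assms(1)] module.subspace_0[OF assms(5,2)] by simp
next
  case (insert x F)
  have "(\<Sum>i\<in>F. g i) \<in> A"
    by (rule module.subspace_sum[OF assms(5,2)]) (use insert in auto)
  moreover have "g x \<in> A" using insert by simp
  moreover have add: "\<forall>a\<in>A. \<forall>b\<in>A. f (a + b) = f a + f b" using assms(1) unfolding lin_on_def by blast
  ultimately have "f (g x + (\<Sum>i\<in>F. g i)) = f (g x) + f (\<Sum>i\<in>F. g i)" by blast
  then show ?case using insert by simp
qed

lemma ble_NInf[simp]: "ble NInf b" and ble_PInf[simp]: "ble b PInf"
  by (auto simp: ble_def)

lemma lam_lam: "lam e (lam e' b) = lam (e' + e) b"
  by (cases b) (auto simp: algebra_simps)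

lemma ble_lam: "ble b b' \<Longrightarrow> ble (lam e b) (lam e b')"
  by (cases b; cases b') (auto simp: ble_def)

lemma ble_self_lam: "e \<ge> 0 \<Longrightarrow> ble b (lam e b)"
  by (cases b) (auto simp: ble_def)

lemma ble_refl[simp]: "ble b b"
  by (cases b) (auto simp: ble_def)

lemma univ_itype: "(UNIV :: itype set) = {TU, TD, TB, TL, TR}"
proof (rule set_eqI)
  fix x :: itype show "x \<in> UNIV \<longleftrightarrow> x \<in> {TU, TD, TB, TL, TR}" by (cases x) auto
qed

lemma finite_itype[simp]: "finite (UNIV :: itype set)"
  by (simp add: univ_itype)

lemma interval_full:
  assumes "convex_B I" "NInf \<in> I" "PInf \<in> I" shows "I = UNIV"
proof (rule set_eqI)
  fix r
  have "ble NInf r \<and> ble r PInf" by simp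
  then show "r \<in> I \<longleftrightarrow> r \<in> UNIV" using assms unfolding convex_B_def by blast
qed

lemma interval_lane:
  assumes "interval_B I" "NInf \<notin> I" "PInf \<notin> I"
  shows "\<exists>i. I \<subseteq> range (\<lambda>r. Pt r i)"
proof -
  from assms obtain p where p: "p \<in> I" unfolding interval_B_def by auto
  then obtain r0 i where pr: "p = Pt r0 i" using assms by (cases p) auto
  have "q \<in> range (\<lambda>r. Pt r i)" if q: "q \<in> I" for q
  proof -
    obtain xs where xs: "xs \<noteq> []" "hd xs = p" "last xs = q" "set xs \<subseteq> I"
      "\<forall>k. Suc k < length xs \<longrightarrow> ble (xs ! k) (xs ! Suc k) \<or> ble (xs ! Suc k) (xs ! k)"
      using assms p q unfolding interval_B_def connected_B_def by blast
    have inI: "k < length xs \<Longrightarrow> xs ! k \<in> I" for k using xs(4) by auto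
    have "k < length xs \<longrightarrow> xs ! k \<in> range (\<lambda>r. Pt r i)" for k
    proof (induction k)
      case 0
      then show ?case using xs(1,2) pr by (simp add: hd_conv_nth[symmetric])
    next
      case (Suc k)
      show ?case
      proof
        assume sk: "Suc k < length xs"
        then obtain r where r: "xs ! k = Pt r i" using Suc by auto
        have "xs ! Suc k \<in> I" using inI sk .
        then have "xs ! Suc k \<noteq> NInf" "xs ! Suc k \<noteq> PInf" using assms by auto
        moreover have "ble (xs ! k) (xs ! Suc k) \<or> ble (xs ! Suc k) (xs ! k)" using xs(5) sk by blast
        ultimately show "xs ! Suc k \<in> range (\<lambda>r. Pt r i)" using r
          by (cases "xs ! Suc k") (auto simp: ble_def)
      qed
    qed
    then have "xs ! (length xs - 1) \<in> range (\<lambda>r. Pt r i)" using xs(1) by simp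
    then show ?thesis using xs(1,3) by (simp add: last_conv_nth)
  qed
  then show ?thesis by blast
qed

lemma itype_exists: "interval_B I \<Longrightarrow> \<exists>X. in_itype X I"
proof -
  assume a: "interval_B I"
  show ?thesis
  proof (cases "NInf \<in> I"; cases "PInf \<in> I")
    assume "NInf \<in> I" "PInf \<in> I"
    then have "I = UNIV" using a interval_full unfolding interval_B_def by blast
    then have "in_itype TB I" by simp
    then show ?thesis by blast
  next
    assume h: "NInf \<in> I" "PInf \<notin> I"
    then have "I \<noteq> UNIV" by auto
    then have "in_itype TL I" using a h by simp
    then show ?thesis by blast
  next
    assume h: "NInf \<notin> I" "PInf \<in> I"
    then have "I \<noteq> UNIV" by auto
    then have "in_itype TR I" using a h by simp
    then show ?thesis by blast
  next
    assume "NInf \<notin> I" "PInf \<notin> I"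
    then obtain i where i: "I \<subseteq> range (\<lambda>r. Pt r i)" using interval_lane a by blast
    show ?thesis
    proof (cases i)
      case L1
      then have "in_itype TU I" using a i by simp
      then show ?thesis by blast
    next
      case L2
      then have "in_itype TD I" using a i by simp
      then show ?thesis by blast
    qed
  qed
qed

lemma itype_unique: "in_itype X I \<Longrightarrow> in_itype Y I \<Longrightarrow> X = Y"
proof -
  assume a: "in_itype X I" "in_itype Y I"
  have n1: "NInf \<notin> range (\<lambda>r. Pt r i)" "PInf \<notin> range (\<lambda>r. Pt r i)" for i by auto
  have d: "I \<subseteq> range (\<lambda>r. Pt r L1) \<Longrightarrow> I \<subseteq> range (\<lambda>r. Pt r L2) \<Longrightarrow> I = {}"
    by auto
  have f: "interval_B I \<Longrightarrow> NInf \<in> I \<Longrightarrow> PInf \<in> I \<Longrightarrow> I = UNIV"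
    using interval_full interval_B_def by blast
  show ?thesis
    using a
    apply (cases X; cases Y)
    apply (simp_all add: interval_B_def)
    using d n1 f interval_B_def by auto
qed

lemma morph_lin: "morph s1 Sp1 Mp1 s2 Sp2 Mp2 f \<Longrightarrow> lin_on s1 s2 (Sp1 b) (f b)"
  unfolding morph_def by blast
lemma morph_in: "morph s1 Sp1 Mp1 s2 Sp2 Mp2 f \<Longrightarrow> x \<in> Sp1 b \<Longrightarrow> f b x \<in> Sp2 b"
  unfolding morph_def by blast
lemma morph_nat: "morph s1 Sp1 Mp1 s2 Sp2 Mp2 f \<Longrightarrow> ble b b' \<Longrightarrow> x \<in> Sp1 b
   \<Longrightarrow> f b' (Mp1 b b' x) = Mp2 b b' (f b x)"
  unfolding morph_def by blast
lemma morphI: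
  assumes "\<And>b. lin_on s1 s2 (Sp1 b) (f b)" "\<And>b x. x \<in> Sp1 b \<Longrightarrow> f b x \<in> Sp2 b"
    "\<And>b b' x. ble b b' \<Longrightarrow> x \<in> Sp1 b \<Longrightarrow> f b' (Mp1 b b' x) = Mp2 b b' (f b x)"
  shows "morph s1 Sp1 Mp1 s2 Sp2 Mp2 f"
  unfolding morph_def using assms by blast
lemma lin_add: "lin_on s1 s2 A f \<Longrightarrow> x \<in> A \<Longrightarrow> y \<in> A \<Longrightarrow> f (x + y) = f x + f y"
  unfolding lin_on_def by blast
lemma lin_scale: "lin_on s1 s2 A f \<Longrightarrow> x \<in> A \<Longrightarrow> f (s1 c x) = s2 c (f x)"
  unfolding lin_on_def by blast
lemma lin_onI: "(\<And>x y. x \<in> A \<Longrightarrow> y \<in> A \<Longrightarrow> f (x + y) = f x + f y) \<Longrightarrow>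
   (\<And>c x. x \<in> A \<Longrightarrow> f (s1 c x) = s2 c (f x)) \<Longrightarrow> lin_on s1 s2 A f"
  unfolding lin_on_def by blast



locale dmod =
  fixes s :: "'k::field \<Rightarrow> 'v::ab_group_add \<Rightarrow> 'v" and Sp :: "bpt \<Rightarrow> 'v set"
    and Mp :: "bpt \<Rightarrow> bpt \<Rightarrow> 'v \<Rightarrow> 'v"
    and J :: "'j set" and N :: "'j \<Rightarrow> bpt \<Rightarrow> 'v set" and Iv :: "'j \<Rightarrow> bpt set"
  assumes pm: "pmod s Sp Mp" and dec: "interval_decomp s Sp Mp J N Iv"
begin

lemma mod: "module s" using pm by (simp add: pmod_def module_iff_vector_space)

sublocale module s by (rule mod)

abbreviation P where "P X b \<equiv> partSp s J N Iv X b"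

lemma P_def': "P X b = span (\<Union>j\<in>{j\<in>J. in_itype X (Iv j)}. N j b)"
  by (simp add: partSp_def)

lemma Sp_sub: "subspace (Sp b)" using pm by (simp add: pmod_def)

lemma Mp_lin: "ble b b' \<Longrightarrow> lin_on s s (Sp b) (Mp b b')" using pm by (simp add: pmod_def)

lemma Mp_in: "ble b b' \<Longrightarrow> x \<in> Sp b \<Longrightarrow> Mp b b' x \<in> Sp b'" using pm unfolding pmod_def by blast

lemma Mp_add: "ble b b' \<Longrightarrow> x \<in> Sp b \<Longrightarrow> y \<in> Sp b \<Longrightarrow> Mp b b' (x + y) = Mp b b' x + Mp b b' y"
  using Mp_lin unfolding lin_on_def by blast

lemma Mp_scale: "ble b b' \<Longrightarrow> x \<in> Sp b \<Longrightarrow> Mp b b' (s c x) = s c (Mp b b' x)"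
  using Mp_lin unfolding lin_on_def by blast

lemma Mp_zero: "ble b b' \<Longrightarrow> Mp b b' 0 = 0"
  using Mp_lin lin_on_zero subspace_0[OF Sp_sub] by blast

lemma Mp_comp: "ble b b' \<Longrightarrow> ble b' b'' \<Longrightarrow> x \<in> Sp b \<Longrightarrow> Mp b' b'' (Mp b b' x) = Mp b b'' x"
  using pm unfolding pmod_def by blast

lemma dec1: "\<forall>j\<in>J. interval_B (Iv j) \<and> submod s Sp Mp (N j)
   \<and> mod_iso s (N j) Mp ((*) :: 'k \<Rightarrow> 'k \<Rightarrow> 'k) (ivSp (Iv j)) (ivMp (Iv j))"
  using dec unfolding interval_decomp_def by (rule conjunct1)

lemma Sp_span: "\<forall>b. Sp b = span (\<Union>j\<in>J. N j b)"
  using dec unfolding interval_decomp_def by (rule conjunct1[OF conjunct2])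

lemma dec3: "\<forall>b F x. finite F \<longrightarrow> F \<subseteq> J \<longrightarrow> (\<forall>j\<in>F. x j \<in> N j b) \<longrightarrow> (\<Sum>j\<in>F. x j) = 0
             \<longrightarrow> (\<forall>j\<in>F. x j = 0)"
  using dec unfolding interval_decomp_def by (rule conjunct2[OF conjunct2])

lemma indep: "finite F \<Longrightarrow> F \<subseteq> J \<Longrightarrow> \<forall>j\<in>F. x j \<in> N j b \<Longrightarrow> sum x F = 0 \<Longrightarrow> j \<in> F \<Longrightarrow> x j = 0"
  using dec3 by blast

lemma submodD:
  assumes "submod s Sp Mp S"
  shows "subspace (S b)" "S b \<subseteq> Sp b" "ble b b' \<Longrightarrow> x \<in> S b \<Longrightarrow> Mp b b' x \<in> S b'"
proof -
  have a: "\<forall>b. subspace (S b) \<and> S b \<subseteq> Sp b" using assms unfolding submod_def by (rule conjunct1)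
  have c: "\<forall>b b'. ble b b' \<longrightarrow> Mp b b' ` S b \<subseteq> S b'" using assms unfolding submod_def by (rule conjunct2)
  show "subspace (S b)" using a by blast
  show "S b \<subseteq> Sp b" using a by blast
  show "ble b b' \<Longrightarrow> x \<in> S b \<Longrightarrow> Mp b b' x \<in> S b'" using c by blast
qed

lemma N_facts:
  assumes j: "j \<in> J"
  shows "interval_B (Iv j)" "subspace (N j b)" "N j b \<subseteq> Sp b"
    "ble b b' \<Longrightarrow> x \<in> N j b \<Longrightarrow> Mp b b' x \<in> N j b'"
    "mod_iso s (N j) Mp ((*) :: 'k \<Rightarrow> 'k \<Rightarrow> 'k) (ivSp (Iv j)) (ivMp (Iv j))"
proof -
  have h: "interval_B (Iv j) \<and> submod s Sp Mp (N j)
   \<and> mod_iso s (N j) Mp ((*) :: 'k \<Rightarrow> 'k \<Rightarrow> 'k) (ivSp (Iv j)) (ivMp (Iv j))"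
    using dec1 j by (rule bspec)
  then show "interval_B (Iv j)" by (rule conjunct1)
  show "mod_iso s (N j) Mp ((*) :: 'k \<Rightarrow> 'k \<Rightarrow> 'k) (ivSp (Iv j)) (ivMp (Iv j))" using h by (rule conjunct2[OF conjunct2])
  have sm: "submod s Sp Mp (N j)" using h by (rule conjunct1[OF conjunct2])
  show "subspace (N j b)" "N j b \<subseteq> Sp b"
    "ble b b' \<Longrightarrow> x \<in> N j b \<Longrightarrow> Mp b b' x \<in> N j b'" using submodD[OF sm] by auto
qed

lemma ivSp_0[simp]: "(0::'k) \<in> ivSp I b" by (simp add: ivSp_def)

lemma N_iso:
  assumes j: "j \<in> J"
  obtains \<phi> \<psi> where "morph s (N j) Mp ((*) :: 'k \<Rightarrow> 'k \<Rightarrow> 'k) (ivSp (Iv j)) (ivMp (Iv j)) \<phi>"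
    "morph ((*) :: 'k \<Rightarrow> 'k \<Rightarrow> 'k) (ivSp (Iv j)) (ivMp (Iv j)) s (N j) Mp \<psi>"
    "\<And>b x. x \<in> N j b \<Longrightarrow> \<psi> b (\<phi> b x) = x"
  using N_facts(5)[OF j] unfolding mod_iso_def by blast

lemma N_zero:
  assumes j: "j \<in> J" and b: "b \<notin> Iv j" and x: "x \<in> N j b"
  shows "x = 0"
proof -
  obtain \<phi> \<psi> where iso: "morph s (N j) Mp ((*) :: 'k \<Rightarrow> 'k \<Rightarrow> 'k) (ivSp (Iv j)) (ivMp (Iv j)) \<phi>"
    "morph ((*) :: 'k \<Rightarrow> 'k \<Rightarrow> 'k) (ivSp (Iv j)) (ivMp (Iv j)) s (N j) Mp \<psi>"
    "\<And>b x. x \<in> N j b \<Longrightarrow> \<psi> b (\<phi> b x) = x"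
    using N_iso[OF j] by blast
  have "\<phi> b x \<in> ivSp (Iv j) b" using morph_in[OF iso(1) x] .
  then have "\<phi> b x = 0" using b by (simp add: ivSp_def)
  moreover have "\<psi> b 0 = 0"
    using lin_on_zero[OF morph_lin[OF iso(2)] ivSp_0] .
  ultimately show ?thesis using iso(3)[OF x] by simp
qed

lemma N_surj:
  assumes j: "j \<in> J" and b: "NInf \<in> Iv j" and x: "x \<in> N j b"
  shows "\<exists>y\<in>N j NInf. Mp NInf b y = x"
proof (cases "b \<in> Iv j")
  case False
  then have "x = 0" using N_zero j x by blast
  then show ?thesis using Mp_zero[of NInf b] subspace_0[OF N_facts(2)[OF j]] by auto
next
  case True
  obtain \<phi> \<psi> where iso: "morph s (N j) Mp ((*) :: 'k \<Rightarrow> 'k \<Rightarrow> 'k) (ivSp (Iv j)) (ivMp (Iv j)) \<phi>"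
    "morph ((*) :: 'k \<Rightarrow> 'k \<Rightarrow> 'k) (ivSp (Iv j)) (ivMp (Iv j)) s (N j) Mp \<psi>"
    "\<And>b x. x \<in> N j b \<Longrightarrow> \<psi> b (\<phi> b x) = x"
    using N_iso[OF j] by blast
  have in1: "\<phi> b x \<in> ivSp (Iv j) NInf" using b by (simp add: ivSp_def)
  have "\<psi> NInf (\<phi> b x) \<in> N j NInf" using morph_in[OF iso(2) in1] .
  moreover have "\<psi> b (ivMp (Iv j) NInf b (\<phi> b x)) = Mp NInf b (\<psi> NInf (\<phi> b x))"
    using morph_nat[OF iso(2) ble_NInf in1] .
  moreover have "ivMp (Iv j) NInf b (\<phi> b x) = \<phi> b x" using b True by (simp add: ivMp_def)
  ultimately show ?thesis using iso(3)[OF x] by metis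
qed

lemma N_inj:
  assumes j: "j \<in> J" and b: "PInf \<in> Iv j" and x: "x \<in> N j b" and z: "Mp b PInf x = 0"
  shows "x = 0"
proof (cases "b \<in> Iv j")
  case False
  then show ?thesis using N_zero j x by blast
next
  case True
  obtain \<phi> \<psi> where iso: "morph s (N j) Mp ((*) :: 'k \<Rightarrow> 'k \<Rightarrow> 'k) (ivSp (Iv j)) (ivMp (Iv j)) \<phi>"
    "morph ((*) :: 'k \<Rightarrow> 'k \<Rightarrow> 'k) (ivSp (Iv j)) (ivMp (Iv j)) s (N j) Mp \<psi>"
    "\<And>b x. x \<in> N j b \<Longrightarrow> \<psi> b (\<phi> b x) = x"
    using N_iso[OF j] by blast
  have "\<phi> PInf (Mp b PInf x) = ivMp (Iv j) b PInf (\<phi> b x)"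
    using morph_nat[OF iso(1) ble_PInf x] .
  moreover have "\<phi> PInf 0 = 0"
    using lin_on_zero[OF morph_lin[OF iso(1)] subspace_0[OF N_facts(2)[OF j]]] .
  ultimately have "\<phi> b x = 0" using z b True by (simp add: ivMp_def)
  moreover have "\<psi> b 0 = 0"
    using lin_on_zero[OF morph_lin[OF iso(2)] ivSp_0] .
  ultimately show ?thesis using iso(3)[OF x] by simp
qed

definition reps :: "'j set \<Rightarrow> bpt \<Rightarrow> 'v set" where
  "reps J' b = {y. \<exists>F x. finite F \<and> F \<subseteq> J' \<and> (\<forall>j\<in>F. x j \<in> N j b) \<and> y = sum x F}"

lemma reps_sub:
  assumes J': "J' \<subseteq> J"
  shows "subspace (reps J' b)"
proof (rule subspaceI)
  show "0 \<in> reps J' b" unfolding reps_def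
    by (rule CollectI, rule exI[of _ "{}"]) simp
next
  fix y1 y2
  assume "y1 \<in> reps J' b" "y2 \<in> reps J' b"
  then obtain F1 x1 F2 x2 where h: "finite F1" "F1 \<subseteq> J'" "\<forall>j\<in>F1. x1 j \<in> N j b" "y1 = sum x1 F1"
    "finite F2" "F2 \<subseteq> J'" "\<forall>j\<in>F2. x2 j \<in> N j b" "y2 = sum x2 F2" unfolding reps_def by blast
  define z where "z j = (if j \<in> F1 then x1 j else 0) + (if j \<in> F2 then x2 j else 0)" for j
  have fin: "finite (F1 \<union> F2)" using h by simp
  have "sum z (F1 \<union> F2) = sum (\<lambda>j. if j \<in> F1 then x1 j else 0) (F1 \<union> F2)
      + sum (\<lambda>j. if j \<in> F2 then x2 j else 0) (F1 \<union> F2)"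
    unfolding z_def by (simp add: sum.distrib)
  also have "sum (\<lambda>j. if j \<in> F1 then x1 j else 0) (F1 \<union> F2) = sum x1 F1"
    using sum.inter_restrict[OF fin, of x1 F1] by (simp add: Int_absorb2)
  also have "sum (\<lambda>j. if j \<in> F2 then x2 j else 0) (F1 \<union> F2) = sum x2 F2"
    using sum.inter_restrict[OF fin, of x2 F2] by (simp add: Int_absorb2)
  finally have "y1 + y2 = sum z (F1 \<union> F2)" using h by simp
  moreover have "\<forall>j\<in>F1 \<union> F2. z j \<in> N j b"
  proof
    fix j assume j: "j \<in> F1 \<union> F2"
    then have jJ: "j \<in> J" using h J' by blast
    have a: "(if j \<in> F1 then x1 j else 0) \<in> N j b"
      using subspace_0[OF N_facts(2)[OF jJ]] h(3) by auto
    have c: "(if j \<in> F2 then x2 j else 0) \<in> N j b"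
      using subspace_0[OF N_facts(2)[OF jJ]] h(7) by auto
    show "z j \<in> N j b" unfolding z_def
      using subspace_add[OF N_facts(2)[OF jJ] a c] .
  qed
  moreover have "F1 \<union> F2 \<subseteq> J'" using h by simp
  ultimately show "y1 + y2 \<in> reps J' b"
    unfolding reps_def by (intro CollectI exI[of _ "F1 \<union> F2"] exI[of _ z]) (use fin in blast)
next
  fix c y1
  assume "y1 \<in> reps J' b"
  then obtain F1 x1 where h: "finite F1" "F1 \<subseteq> J'" "\<forall>j\<in>F1. x1 j \<in> N j b" "y1 = sum x1 F1"
    unfolding reps_def by blast
  have "s c y1 = sum (\<lambda>j. s c (x1 j)) F1" using h by (simp add: scale_sum_right)
  moreover have "\<forall>j\<in>F1. s c (x1 j) \<in> N j b"
  proof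
    fix j assume jF: "j \<in> F1"
    then have jJ: "j \<in> J" using h J' by blast
    have "x1 j \<in> N j b" using h(3) jF by blast
    then show "s c (x1 j) \<in> N j b" using subspace_scale[OF N_facts(2)[OF jJ]] by blast
  qed
  ultimately show "s c y1 \<in> reps J' b" unfolding reps_def
    by (intro CollectI exI[of _ F1] exI[of _ "\<lambda>j. s c (x1 j)"]) (use h in blast)
qed

lemma span_rep:
  assumes J': "J' \<subseteq> J" and y: "y \<in> span (\<Union>j\<in>J'. N j b)"
  shows "\<exists>F x. finite F \<and> F \<subseteq> J' \<and> (\<forall>j\<in>F. x j \<in> N j b) \<and> y = sum x F"
proof -
  have "y \<in> reps J' b"
  proof (rule span_subspace_induct[OF y reps_sub[OF J']])
    fix z assume "z \<in> (\<Union>j\<in>J'. N j b)"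
    then obtain j where j: "j \<in> J'" "z \<in> N j b" by blast
    show "z \<in> reps J' b" unfolding reps_def
      by (rule CollectI, rule exI[of _ "{j}"], rule exI[of _ "\<lambda>_. z"]) (use j in auto)
  qed
  then show ?thesis unfolding reps_def by blast
qed

end


context dmod begin

lemma disj_spans:
  assumes J1: "J1 \<subseteq> J" and J2: "J2 \<subseteq> J" and dj: "J1 \<inter> J2 = {}"
    and y1: "y \<in> span (\<Union>j\<in>J1. N j b)" and y2: "y \<in> span (\<Union>j\<in>J2. N j b)"
  shows "y = 0"
proof -
  obtain F1 x1 where h1: "finite F1" "F1 \<subseteq> J1" "\<forall>j\<in>F1. x1 j \<in> N j b" "y = sum x1 F1"
    using span_rep[OF J1 y1] by blast
  obtain F2 x2 where h2: "finite F2" "F2 \<subseteq> J2" "\<forall>j\<in>F2. x2 j \<in> N j b" "y = sum x2 F2"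
    using span_rep[OF J2 y2] by blast
  define z where "z j = (if j \<in> F1 then x1 j else - x2 j)" for j
  have d: "F1 \<inter> F2 = {}" using h1(2) h2(2) dj by blast
  have "sum z (F1 \<union> F2) = sum z F1 + sum z F2"
    by (rule sum.union_disjoint) (use h1 h2 d in auto)
  also have "sum z F1 = sum x1 F1" unfolding z_def by (rule sum.cong) auto
  also have "sum z F2 = sum (\<lambda>j. - x2 j) F2" unfolding z_def
    by (rule sum.cong) (use d in auto)
  also have "\<dots> = - sum x2 F2" by (simp add: sum_negf)
  finally have z0: "sum z (F1 \<union> F2) = 0" using h1(4) h2(4) by simp
  have zin: "\<forall>j\<in>F1 \<union> F2. z j \<in> N j b"
  proof
    fix j assume j: "j \<in> F1 \<union> F2"
    then have jJ: "j \<in> J" using h1(2) h2(2) J1 J2 by blast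
    show "z j \<in> N j b"
    proof (cases "j \<in> F1")
      case True then show ?thesis unfolding z_def using h1(3) by simp
    next
      case False
      then have "j \<in> F2" using j by blast
      then show ?thesis unfolding z_def using False h2(3) subspace_neg[OF N_facts(2)[OF jJ]] by simp
    qed
  qed
  have "\<forall>j\<in>F1. x1 j = 0"
  proof
    fix j assume j: "j \<in> F1"
    have "z j = 0"
      by (rule indep[of "F1 \<union> F2" z b j]) (use h1 h2 J1 J2 zin z0 j in auto)
    then show "x1 j = 0" using j unfolding z_def by simp
  qed
  then show ?thesis using h1(4) by simp
qed

lemma P_sub: "subspace (P X b)"
  unfolding P_def' by (rule subspace_span)

lemma P_Sp: "P X b \<subseteq> Sp b"
  unfolding P_def'
proof (rule span_minimal[OF _ Sp_sub])
  show "(\<Union>j\<in>{j \<in> J. in_itype X (Iv j)}. N j b) \<subseteq> Sp b"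
    using N_facts(3) by blast
qed

lemma N_P: "j \<in> J \<Longrightarrow> in_itype X (Iv j) \<Longrightarrow> x \<in> N j b \<Longrightarrow> x \<in> P X b"
  unfolding P_def' by (rule span_base) blast

lemma P_Mp:
  assumes bb: "ble b b'" and x: "x \<in> P X b"
  shows "Mp b b' x \<in> P X b'"
proof -
  have "x \<in> {x. x \<in> Sp b \<and> Mp b b' x \<in> P X b'}"
  proof (rule span_subspace_induct[OF x[unfolded P_def']])
    show "subspace {x. x \<in> Sp b \<and> Mp b b' x \<in> P X b'}"
    proof (rule subspaceI)
      show "0 \<in> {x. x \<in> Sp b \<and> Mp b b' x \<in> P X b'}"
        using subspace_0[OF Sp_sub] Mp_zero[OF bb] subspace_0[OF P_sub] by simp
    next
      fix x y assume "x \<in> {x. x \<in> Sp b \<and> Mp b b' x \<in> P X b'}" "y \<in> {x. x \<in> Sp b \<and> Mp b b' x \<in> P X b'}"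
      then show "x + y \<in> {x. x \<in> Sp b \<and> Mp b b' x \<in> P X b'}"
        using Mp_add[OF bb] subspace_add[OF Sp_sub] subspace_add[OF P_sub] by simp
    next
      fix c x assume "x \<in> {x. x \<in> Sp b \<and> Mp b b' x \<in> P X b'}"
      then show "s c x \<in> {x. x \<in> Sp b \<and> Mp b b' x \<in> P X b'}"
        using Mp_scale[OF bb] subspace_scale[OF Sp_sub] subspace_scale[OF P_sub] by simp
    qed
  next
    fix z assume "z \<in> (\<Union>j\<in>{j \<in> J. in_itype X (Iv j)}. N j b)"
    then obtain j where j: "j \<in> J" "in_itype X (Iv j)" "z \<in> N j b" by blast
    have "Mp b b' z \<in> N j b'" using N_facts(4)[OF j(1) bb j(3)] .
    then have "Mp b b' z \<in> P X b'" using N_P j by blast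
    then show "z \<in> {x. x \<in> Sp b \<and> Mp b b' x \<in> P X b'}" using N_facts(3)[OF j(1)] j(3) by blast
  qed
  then show ?thesis by simp
qed

lemma decomp_ex:
  assumes x: "x \<in> Sp b"
  shows "\<exists>f. (\<forall>X. f X \<in> P X b) \<and> x = (\<Sum>X\<in>UNIV. f X)"
proof -
  let ?Q = "{x. \<exists>f. (\<forall>X. f X \<in> P X b) \<and> x = (\<Sum>X\<in>UNIV. f X)}"
  have "x \<in> ?Q"
  proof (rule span_subspace_induct[OF x[unfolded Sp_span[rule_format]]])
    show "subspace ?Q"
    proof (rule subspaceI)
      show "0 \<in> ?Q"
        by (intro CollectI exI[of _ "\<lambda>_. 0"]) (simp add: subspace_0[OF P_sub])
    next
      fix x y assume "x \<in> ?Q" "y \<in> ?Q"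
      then obtain f g where f: "\<forall>X. f X \<in> P X b" "x = (\<Sum>X\<in>UNIV. f X)"
        and g: "\<forall>X. g X \<in> P X b" "y = (\<Sum>X\<in>UNIV. g X)" by blast
      have "x + y = (\<Sum>X\<in>UNIV. f X + g X)" using f g by (simp add: sum.distrib)
      moreover have "\<forall>X. f X + g X \<in> P X b" using f g subspace_add[OF P_sub] by blast
      ultimately show "x + y \<in> ?Q" by (intro CollectI exI[of _ "\<lambda>X. f X + g X"]) simp
    next
      fix c x assume "x \<in> ?Q"
      then obtain f where f: "\<forall>X. f X \<in> P X b" "x = (\<Sum>X\<in>UNIV. f X)" by blast
      have "s c x = (\<Sum>X\<in>UNIV. s c (f X))" using f by (simp add: scale_sum_right)
      moreover have "\<forall>X. s c (f X) \<in> P X b" using f subspace_scale[OF P_sub] by blast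
      ultimately show "s c x \<in> ?Q" by (intro CollectI exI[of _ "\<lambda>X. s c (f X)"]) simp
    qed
  next
    fix z assume "z \<in> (\<Union>j\<in>J. N j b)"
    then obtain j where j: "j \<in> J" "z \<in> N j b" by blast
    obtain X where X: "in_itype X (Iv j)" using itype_exists[OF N_facts(1)[OF j(1)]] by blast
    have zP: "z \<in> P X b" using N_P[OF j(1) X j(2)] .
    have "\<forall>Y. (if Y = X then z else 0) \<in> P Y b" using zP subspace_0[OF P_sub] by simp
    moreover have "z = (\<Sum>Y\<in>UNIV. if Y = X then z else 0)" by simp
    ultimately show "z \<in> ?Q" by (intro CollectI exI[of _ "\<lambda>Y. if Y = X then z else 0"]) simp
  qed
  then show ?thesis by simp
qed

lemma decomp_unique:
  assumes f: "\<forall>Y. f Y \<in> P Y b" and s0: "(\<Sum>Y\<in>UNIV. f Y) = 0"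
  shows "f X = 0"
proof -
  let ?J1 = "{j \<in> J. in_itype X (Iv j)}" and ?J2 = "{j \<in> J. \<not> in_itype X (Iv j)}"
  have "(\<Sum>Y\<in>UNIV. f Y) = f X + (\<Sum>Y\<in>UNIV - {X}. f Y)"
    by (rule sum.remove) auto
  then have eq: "f X = - (\<Sum>Y\<in>UNIV - {X}. f Y)" using s0 by (simp add: add_eq_0_iff)
  have "\<And>Y. Y \<in> UNIV - {X} \<Longrightarrow> f Y \<in> span (\<Union>j\<in>?J2. N j b)"
  proof -
    fix Y assume Y: "Y \<in> UNIV - {X}"
    have "{j \<in> J. in_itype Y (Iv j)} \<subseteq> ?J2" using Y itype_unique by blast
    then have "P Y b \<subseteq> span (\<Union>j\<in>?J2. N j b)" unfolding P_def' by (intro span_mono) blast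
    then show "f Y \<in> span (\<Union>j\<in>?J2. N j b)" using f by blast
  qed
  then have "(\<Sum>Y\<in>UNIV - {X}. f Y) \<in> span (\<Union>j\<in>?J2. N j b)"
    by (intro span_sum) blast
  then have "f X \<in> span (\<Union>j\<in>?J2. N j b)" using eq span_neg by metis
  moreover have "f X \<in> span (\<Union>j\<in>?J1. N j b)" using f P_def' by blast
  ultimately show ?thesis by (intro disj_spans[of ?J1 ?J2]) auto
qed

end


context dmod begin

definition proj :: "itype \<Rightarrow> bpt \<Rightarrow> 'v \<Rightarrow> 'v" where
  "proj X b x = (THE f. (\<forall>Y. f Y \<in> P Y b) \<and> x = (\<Sum>Y\<in>UNIV. f Y)) X"

lemma proj_char:
  assumes f: "\<forall>Y. f Y \<in> P Y b"
  shows "proj X b (\<Sum>Y\<in>UNIV. f Y) = f X"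
proof -
  have "(THE g. (\<forall>Y. g Y \<in> P Y b) \<and> (\<Sum>Y\<in>UNIV. f Y) = (\<Sum>Y\<in>UNIV. g Y)) = f"
  proof (rule the_equality)
    show "(\<forall>Y. f Y \<in> P Y b) \<and> (\<Sum>Y\<in>UNIV. f Y) = (\<Sum>Y\<in>UNIV. f Y)" using f by simp
  next
    fix g assume g: "(\<forall>Y. g Y \<in> P Y b) \<and> (\<Sum>Y\<in>UNIV. f Y) = (\<Sum>Y\<in>UNIV. g Y)"
    show "g = f"
    proof
      fix Z
      have "\<forall>Y. g Y - f Y \<in> P Y b" using f g subspace_diff[OF P_sub] by blast
      moreover have "(\<Sum>Y\<in>UNIV. g Y - f Y) = 0" using g by (simp add: sum_subtractf)
      ultimately have "g Z - f Z = 0" by (rule decomp_unique)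
      then show "g Z = f Z" by simp
    qed
  qed
  then show ?thesis unfolding proj_def by simp
qed

lemma proj_in: "x \<in> Sp b \<Longrightarrow> proj X b x \<in> P X b"
  using decomp_ex proj_char by metis

lemma proj_sum: "x \<in> Sp b \<Longrightarrow> (\<Sum>X\<in>UNIV. proj X b x) = x"
proof -
  assume "x \<in> Sp b"
  then obtain f where f: "\<forall>X. f X \<in> P X b" "x = (\<Sum>X\<in>UNIV. f X)" using decomp_ex by blast
  have "proj X b x = f X" for X using proj_char[OF f(1)] f(2) by simp
  then show ?thesis using f(2) by simp
qed

lemma proj_delta:
  assumes x: "x \<in> P Y b"
  shows "proj X b x = (if X = Y then x else 0)"
proof -
  have f: "\<forall>Z. (if Z = Y then x else 0) \<in> P Z b" using x subspace_0[OF P_sub] by simp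
  have "x = (\<Sum>Z\<in>UNIV. if Z = Y then x else 0)" by simp
  then show ?thesis using proj_char[OF f, of X] by simp
qed

lemma proj_id: "x \<in> P X b \<Longrightarrow> proj X b x = x"
  using proj_delta by simp

lemma proj_lin: "lin_on s s (Sp b) (proj X b)"
proof (rule lin_onI)
  fix x y assume x: "x \<in> Sp b" and y: "y \<in> Sp b"
  have f: "\<forall>Z. proj Z b x + proj Z b y \<in> P Z b" using proj_in x y subspace_add[OF P_sub] by blast
  have "x + y = (\<Sum>Z\<in>UNIV. proj Z b x + proj Z b y)" using proj_sum x y by (simp add: sum.distrib)
  then show "proj X b (x + y) = proj X b x + proj X b y" using proj_char[OF f, of X] by simp
next
  fix c x assume x: "x \<in> Sp b"
  have f: "\<forall>Z. s c (proj Z b x) \<in> P Z b" using proj_in x subspace_scale[OF P_sub] by blast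
  have "s c x = (\<Sum>Z\<in>UNIV. s c (proj Z b x))" using proj_sum[OF x] scale_sum_right[of c "\<lambda>Z. proj Z b x" UNIV] by metis
  then show "proj X b (s c x) = s c (proj X b x)" using proj_char[OF f, of X] by simp
qed

lemma proj_nat:
  assumes bb: "ble b b'" and x: "x \<in> Sp b"
  shows "Mp b b' (proj X b x) = proj X b' (Mp b b' x)"
proof -
  have "Mp b b' x = Mp b b' (\<Sum>Y\<in>UNIV. proj Y b x)" using proj_sum[OF x] by simp
  also have "\<dots> = (\<Sum>Y\<in>UNIV. Mp b b' (proj Y b x))"
    by (rule lin_on_sum[OF Mp_lin[OF bb] Sp_sub finite_itype _ mod]) (use proj_in P_Sp x in blast)
  finally have eq: "Mp b b' x = (\<Sum>Y\<in>UNIV. Mp b b' (proj Y b x))" .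
  have f: "\<forall>Y. Mp b b' (proj Y b x) \<in> P Y b'" using P_Mp[OF bb] proj_in[OF x] by blast
  show ?thesis using proj_char[OF f, of X] eq by simp
qed

lemma proj_Sp: "x \<in> Sp b \<Longrightarrow> proj X b x \<in> Sp b"
  using proj_in P_Sp by blast

lemma proj_zero: "proj X b 0 = 0"
  using lin_on_zero[OF proj_lin subspace_0[OF Sp_sub]] .

lemma P_zero:
  assumes h: "\<forall>j\<in>J. in_itype X (Iv j) \<longrightarrow> b \<notin> Iv j" and x: "x \<in> P X b"
  shows "x = 0"
proof -
  have "P X b \<subseteq> {0}" unfolding P_def'
  proof (rule span_minimal)
    show "(\<Union>j\<in>{j \<in> J. in_itype X (Iv j)}. N j b) \<subseteq> {0}"
      using h N_zero by blast
    show "subspace {0}" by simp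
  qed
  then show ?thesis using x by blast
qed

lemma P_surj:
  assumes h: "\<forall>j\<in>J. in_itype X (Iv j) \<longrightarrow> NInf \<in> Iv j" and x: "x \<in> P X b"
  shows "\<exists>y\<in>P X NInf. Mp NInf b y = x"
proof -
  let ?Q = "{x. \<exists>y\<in>P X NInf. Mp NInf b y = x}"
  have "x \<in> ?Q"
  proof (rule span_subspace_induct[OF x[unfolded P_def']])
    show "subspace ?Q"
    proof (rule subspaceI)
      show "0 \<in> ?Q" using subspace_0[OF P_sub] Mp_zero[OF ble_NInf] by force
    next
      fix x1 x2 assume "x1 \<in> ?Q" "x2 \<in> ?Q"
      then obtain y1 y2 where y: "y1 \<in> P X NInf" "Mp NInf b y1 = x1" "y2 \<in> P X NInf" "Mp NInf b y2 = x2"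
        by blast
      have "Mp NInf b (y1 + y2) = x1 + x2" using Mp_add[OF ble_NInf] y P_Sp by blast
      moreover have "y1 + y2 \<in> P X NInf" using y subspace_add[OF P_sub] by blast
      ultimately show "x1 + x2 \<in> ?Q" by blast
    next
      fix c x1 assume "x1 \<in> ?Q"
      then obtain y1 where y: "y1 \<in> P X NInf" "Mp NInf b y1 = x1" by blast
      have "Mp NInf b (s c y1) = s c x1" using Mp_scale[OF ble_NInf] y P_Sp by blast
      moreover have "s c y1 \<in> P X NInf" using y subspace_scale[OF P_sub] by blast
      ultimately show "s c x1 \<in> ?Q" by blast
    qed
  next
    fix z assume "z \<in> (\<Union>j\<in>{j \<in> J. in_itype X (Iv j)}. N j b)"
    then obtain j where j: "j \<in> J" "in_itype X (Iv j)" "z \<in> N j b" by blast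
    obtain y where y: "y \<in> N j NInf" "Mp NInf b y = z" using N_surj[OF j(1) _ j(3)] h j by blast
    have "y \<in> P X NInf" using N_P[OF j(1,2) y(1)] .
    then show "z \<in> ?Q" using y by blast
  qed
  then show ?thesis by simp
qed

lemma P_inj:
  assumes h: "\<forall>j\<in>J. in_itype X (Iv j) \<longrightarrow> PInf \<in> Iv j" and x: "x \<in> P X b"
    and z: "Mp b PInf x = 0"
  shows "x = 0"
proof -
  let ?J1 = "{j \<in> J. in_itype X (Iv j)}"
  obtain F xs where F: "finite F" "F \<subseteq> ?J1" "\<forall>j\<in>F. xs j \<in> N j b" "x = sum xs F"
    using span_rep[of ?J1 x b] x P_def' by blast
  have FJ: "F \<subseteq> J" using F(2) by blast
  have xsSp: "\<forall>j\<in>F. xs j \<in> Sp b" using F(3) FJ N_facts(3) by blast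
  have "Mp b PInf x = (\<Sum>j\<in>F. Mp b PInf (xs j))"
    unfolding F(4) by (rule lin_on_sum[OF Mp_lin[OF ble_PInf] Sp_sub F(1) xsSp mod])
  then have s0: "(\<Sum>j\<in>F. Mp b PInf (xs j)) = 0" using z by simp
  have "\<forall>j\<in>F. Mp b PInf (xs j) \<in> N j PInf" using F(3) FJ N_facts(4)[OF _ ble_PInf] by blast
  then have "\<forall>j\<in>F. Mp b PInf (xs j) = 0" using indep[OF F(1) FJ _ s0] by blast
  then have "\<forall>j\<in>F. xs j = 0" using N_inj F(2,3) h by blast
  then show ?thesis using F(4) by simp
qed

end


lemma it_NInf: "X \<in> {TU, TD, TR} \<Longrightarrow> in_itype X I \<Longrightarrow> NInf \<notin> I"
proof (rule notI)
  assume a: "X \<in> {TU, TD, TR}" "in_itype X I" "NInf \<in> I"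
  consider "X = TU" | "X = TD" | "X = TR" using a(1) by blast
  then show False
  proof cases
    case 1 then show False using a by auto
  next
    case 2 then show False using a by auto
  next
    case 3
    then have "interval_B I" "I \<noteq> UNIV" "PInf \<in> I" using a by auto
    then show False using interval_full a(3) unfolding interval_B_def by blast
  qed
qed

lemma it_PInf: "X \<in> {TU, TD, TL} \<Longrightarrow> in_itype X I \<Longrightarrow> PInf \<notin> I"
proof (rule notI)
  assume a: "X \<in> {TU, TD, TL}" "in_itype X I" "PInf \<in> I"
  consider "X = TU" | "X = TD" | "X = TL" using a(1) by blast
  then show False
  proof cases
    case 1 then show False using a by auto
  next
    case 2 then show False using a by auto
  next
    case 3
    then have "interval_B I" "I \<noteq> UNIV" "NInf \<in> I" using a by auto
    then show False using interval_full a(3) unfolding interval_B_def by blast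
  qed
qed

lemma it_NInf_in: "X \<in> {TL, TB} \<Longrightarrow> in_itype X I \<Longrightarrow> NInf \<in> I"
  by auto

lemma it_PInf_in: "X \<in> {TR, TB} \<Longrightarrow> in_itype X I \<Longrightarrow> PInf \<in> I"
  by auto

definition lane1 :: "bpt set" where "lane1 = range (\<lambda>r. Pt r L1)"
definition lane2 :: "bpt set" where "lane2 = range (\<lambda>r. Pt r L2)"

lemma lam_lane1: "b \<in> lane1 \<Longrightarrow> lam e b \<in> lane1" unfolding lane1_def by auto
lemma lam_lane2: "b \<in> lane2 \<Longrightarrow> lam e b \<in> lane2" unfolding lane2_def by auto
lemma lane12: "b \<in> lane1 \<Longrightarrow> b \<notin> lane2" unfolding lane1_def lane2_def by auto

context dmod begin

lemma Pz_NInf: "X \<in> {TU, TD, TR} \<Longrightarrow> x \<in> P X NInf \<Longrightarrow> x = 0"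
  using P_zero it_NInf by blast

lemma Pz_PInf: "X \<in> {TU, TD, TL} \<Longrightarrow> x \<in> P X PInf \<Longrightarrow> x = 0"
  using P_zero it_PInf by blast

lemma Psurj: "X \<in> {TL, TB} \<Longrightarrow> x \<in> P X b \<Longrightarrow> \<exists>y\<in>P X NInf. Mp NInf b y = x"
  using P_surj it_NInf_in by blast

lemma Pinj: "X \<in> {TR, TB} \<Longrightarrow> x \<in> P X b \<Longrightarrow> Mp b PInf x = 0 \<Longrightarrow> x = 0"
  using P_inj it_PInf_in by blast

lemma PU_lane: "b \<notin> lane1 \<Longrightarrow> x \<in> P TU b \<Longrightarrow> x = 0"
  by (rule P_zero[of TU]) (auto simp: lane1_def)

lemma PD_lane: "b \<notin> lane2 \<Longrightarrow> x \<in> P TD b \<Longrightarrow> x = 0"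
  by (rule P_zero[of TD]) (auto simp: lane2_def)

end

lemma V1:
  assumes f: "morph s1 SA MA s2 SC MC f"
    and sa: "\<And>b x. x \<in> SA b \<Longrightarrow> \<exists>y\<in>SA NInf. MA NInf b y = x"
    and sc: "\<And>z. z \<in> SC NInf \<Longrightarrow> z = 0"
    and mc: "\<And>b. MC NInf b 0 = 0"
    and x: "x \<in> SA b"
  shows "f b x = 0"
proof -
  obtain y where y: "y \<in> SA NInf" "MA NInf b y = x" using sa[OF x] by blast
  have "f b x = MC NInf b (f NInf y)" using morph_nat[OF f ble_NInf[of b] y(1)] y(2) by simp
  also have "f NInf y = 0" using sc morph_in[OF f y(1)] by blast
  finally show ?thesis using mc by simp
qed

lemma V2:
  assumes f: "morph s1 SA MA s2 SC MC f"
    and sa: "\<And>x. x \<in> SA PInf \<Longrightarrow> x = 0"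
    and ma: "\<And>b x. x \<in> SA b \<Longrightarrow> MA b PInf x \<in> SA PInf"
    and sc: "\<And>b z. z \<in> SC b \<Longrightarrow> MC b PInf z = 0 \<Longrightarrow> z = 0"
    and x: "x \<in> SA b"
  shows "f b x = 0"
proof -
  have m: "MA b PInf x \<in> SA PInf" using ma[OF x] .
  then have m0: "MA b PInf x = 0" using sa by blast
  have "MC b PInf (f b x) = f PInf (MA b PInf x)" using morph_nat[OF f ble_PInf[of b] x] by simp
  also have "\<dots> = 0" using lin_on_zero[OF morph_lin[OF f]] m m0 by metis
  finally show ?thesis using sc morph_in[OF f x] by blast
qed

lemma V3:
  assumes f: "morph s1 SA MA s2 SC MC f"
    and sa: "\<And>b x. b \<notin> Z \<Longrightarrow> x \<in> SA b \<Longrightarrow> x = 0"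
    and sc: "\<And>b z. b \<in> Z \<Longrightarrow> z \<in> SC b \<Longrightarrow> z = 0"
    and x: "x \<in> SA b"
  shows "f b x = 0"
proof (cases "b \<in> Z")
  case True
  then show ?thesis using sc morph_in[OF f x] by blast
next
  case False
  then have "x = 0" using sa x by blast
  then show ?thesis using lin_on_zero[OF morph_lin[OF f]] x by metis
qed

definition hz :: "itype \<Rightarrow> itype \<Rightarrow> bool" where
  "hz X Y \<longleftrightarrow> (X \<in> {TL, TB} \<and> Y \<in> {TU, TD, TR}) \<or> (X \<in> {TU, TD, TL} \<and> Y \<in> {TR, TB})
     \<or> (X = TU \<and> Y = TD) \<or> (X = TD \<and> Y = TU)"

lemma hz_or: "X \<noteq> Y \<Longrightarrow> hz X Y \<or> hz Y X"
  by (cases X; cases Y) (simp_all add: hz_def)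

lemma vanish:
  assumes A: "dmod s1 Sp1 Mp1 J1 N1 Iv1" and C: "dmod s2 Sp2 Mp2 J2 N2 Iv2"
    and f: "morph s1 (partSp s1 J1 N1 Iv1 X) Mp1 s2 (shSp e (partSp s2 J2 N2 Iv2 Y)) (shMp e Mp2) f"
    and h: "hz X Y" and x: "x \<in> partSp s1 J1 N1 Iv1 X b"
  shows "f b x = 0"
proof -
  interpret a: dmod s1 Sp1 Mp1 J1 N1 Iv1 by (rule A)
  interpret c: dmod s2 Sp2 Mp2 J2 N2 Iv2 by (rule C)
  consider "X \<in> {TL, TB}" "Y \<in> {TU, TD, TR}" | "X \<in> {TU, TD, TL}" "Y \<in> {TR, TB}"
    | "X = TU" "Y = TD" | "X = TD" "Y = TU" using h unfolding hz_def by blast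
  then show ?thesis
  proof cases
    case 1
    show ?thesis
    proof (rule V1[OF f _ _ _ x])
      show "\<And>b x. x \<in> a.P X b \<Longrightarrow> \<exists>y\<in>a.P X NInf. Mp1 NInf b y = x" using a.Psurj 1 by blast
      show "\<And>z. z \<in> shSp e (c.P Y) NInf \<Longrightarrow> z = 0" using c.Pz_NInf 1 by (simp add: shSp_def)
      show "\<And>b. shMp e Mp2 NInf b 0 = 0" using c.Mp_zero by (simp add: shMp_def)
    qed
  next
    case 2
    show ?thesis
    proof (rule V2[OF f _ _ _ x])
      show "\<And>x. x \<in> a.P X PInf \<Longrightarrow> x = 0" using a.Pz_PInf 2 by blast
      show "\<And>b x. x \<in> a.P X b \<Longrightarrow> Mp1 b PInf x \<in> a.P X PInf" using a.P_Mp by simp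
      show "\<And>b z. z \<in> shSp e (c.P Y) b \<Longrightarrow> shMp e Mp2 b PInf z = 0 \<Longrightarrow> z = 0"
        using c.Pinj 2 by (simp add: shSp_def shMp_def)
    qed
  next
    case 3
    show ?thesis
    proof (rule V3[OF f _ _ x, of lane1])
      show "\<And>b x. b \<notin> lane1 \<Longrightarrow> x \<in> a.P X b \<Longrightarrow> x = 0" using a.PU_lane 3 by blast
      show "\<And>b z. b \<in> lane1 \<Longrightarrow> z \<in> shSp e (c.P Y) b \<Longrightarrow> z = 0"
        using c.PD_lane 3 lam_lane1 lane12 unfolding shSp_def by metis
    qed
  next
    case 4
    show ?thesis
    proof (rule V3[OF f _ _ x, of lane2])
      show "\<And>b x. b \<notin> lane2 \<Longrightarrow> x \<in> a.P X b \<Longrightarrow> x = 0" using a.PD_lane 4 by blast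
      show "\<And>b z. b \<in> lane2 \<Longrightarrow> z \<in> shSp e (c.P Y) b \<Longrightarrow> z = 0"
        using c.PU_lane 4 lam_lane2 lane12 unfolding shSp_def by metis
    qed
  qed
qed



lemma two_e: "lam e (lam e b) = lam (2 * e) b"
  by (cases b) auto

lemma proj_morph:
  assumes A: "dmod s1 Sp1 Mp1 J1 N1 Iv1" and C: "dmod s2 Sp2 Mp2 J2 N2 Iv2"
    and al: "morph s1 Sp1 Mp1 s2 (shSp e Sp2) (shMp e Mp2) \<alpha>"
  shows "morph s1 (partSp s1 J1 N1 Iv1 X) Mp1 s2 (shSp e (partSp s2 J2 N2 Iv2 Y)) (shMp e Mp2)
           (\<lambda>b x. dmod.proj s2 J2 N2 Iv2 Y (lam e b) (\<alpha> b x))"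
proof -
  interpret a: dmod s1 Sp1 Mp1 J1 N1 Iv1 by (rule A)
  interpret c: dmod s2 Sp2 Mp2 J2 N2 Iv2 by (rule C)
  have inS: "x \<in> a.P X b \<Longrightarrow> \<alpha> b x \<in> Sp2 (lam e b)" for x b
    using morph_in[OF al, of x b] a.P_Sp unfolding shSp_def by blast
  show ?thesis
  proof (rule morphI)
    fix b
    show "lin_on s1 s2 (a.P X b) (\<lambda>x. c.proj Y (lam e b) (\<alpha> b x))"
    proof (rule lin_onI)
      fix x y assume x: "x \<in> a.P X b" and y: "y \<in> a.P X b"
      have "\<alpha> b (x + y) = \<alpha> b x + \<alpha> b y"
        using lin_add[OF morph_lin[OF al]] x y a.P_Sp by blast
      then show "c.proj Y (lam e b) (\<alpha> b (x + y)) = c.proj Y (lam e b) (\<alpha> b x) + c.proj Y (lam e b) (\<alpha> b y)"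
        using lin_add[OF c.proj_lin] inS[OF x] inS[OF y] by simp
    next
      fix k x assume x: "x \<in> a.P X b"
      have "\<alpha> b (s1 k x) = s2 k (\<alpha> b x)"
        using lin_scale[OF morph_lin[OF al]] x a.P_Sp by blast
      then show "c.proj Y (lam e b) (\<alpha> b (s1 k x)) = s2 k (c.proj Y (lam e b) (\<alpha> b x))"
        using lin_scale[OF c.proj_lin] inS[OF x] by simp
    qed
  next
    fix b x assume x: "x \<in> a.P X b"
    show "c.proj Y (lam e b) (\<alpha> b x) \<in> shSp e (c.P Y) b"
      using c.proj_in[OF inS[OF x]] unfolding shSp_def .
  next
    fix b b' x assume bb: "ble b b'" and x: "x \<in> a.P X b"
    have "\<alpha> b' (Mp1 b b' x) = Mp2 (lam e b) (lam e b') (\<alpha> b x)"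
      using morph_nat[OF al bb] x a.P_Sp unfolding shMp_def by blast
    then show "c.proj Y (lam e b') (\<alpha> b' (Mp1 b b' x)) = shMp e Mp2 b b' (c.proj Y (lam e b) (\<alpha> b x))"
      unfolding shMp_def using c.proj_nat[OF ble_lam[OF bb] inS[OF x]] by simp
  qed
qed

lemma comp1:
  assumes A: "dmod s1 Sp1 Mp1 J1 N1 Iv1" and C: "dmod s2 Sp2 Mp2 J2 N2 Iv2"
    and al: "morph s1 Sp1 Mp1 s2 (shSp e Sp2) (shMp e Mp2) \<alpha>"
    and be: "morph s2 Sp2 Mp2 s1 (shSp e Sp1) (shMp e Mp1) \<beta>"
    and e: "e \<ge> 0"
    and h: "\<forall>b. \<forall>x\<in>Sp1 b. \<beta> (lam e b) (\<alpha> b x) = Mp1 b (lam (2 * e) b) x"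
    and x: "x \<in> partSp s1 J1 N1 Iv1 X b"
  shows "dmod.proj s1 J1 N1 Iv1 X (lam e (lam e b)) (\<beta> (lam e b) (dmod.proj s2 J2 N2 Iv2 X (lam e b) (\<alpha> b x)))
     = Mp1 b (lam (2 * e) b) x"
proof -
  interpret a: dmod s1 Sp1 Mp1 J1 N1 Iv1 by (rule A)
  interpret c: dmod s2 Sp2 Mp2 J2 N2 Iv2 by (rule C)
  define B where "B = lam e b"
  define B2 where "B2 = lam e B"
  have B2: "B2 = lam (2 * e) b" unfolding B2_def B_def by (rule two_e)
  have xS: "x \<in> Sp1 b" using x a.P_Sp by blast
  define y where "y = \<alpha> b x"
  have yS: "y \<in> Sp2 B" using morph_in[OF al xS] unfolding y_def B_def shSp_def .
  have bS: "\<And>z. z \<in> Sp2 B \<Longrightarrow> \<beta> B z \<in> Sp1 B2" using morph_in[OF be] unfolding shSp_def B2_def by blast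
  have "\<beta> B y = \<beta> B (\<Sum>Y\<in>UNIV. c.proj Y B y)" using c.proj_sum[OF yS] by simp
  also have "\<dots> = (\<Sum>Y\<in>UNIV. \<beta> B (c.proj Y B y))"
    by (rule lin_on_sum[OF morph_lin[OF be] c.Sp_sub finite_itype _ c.mod]) (use c.proj_Sp yS in blast)
  finally have eq1: "\<beta> B y = (\<Sum>Y\<in>UNIV. \<beta> B (c.proj Y B y))" .
  have "a.proj X B2 (\<beta> B y) = (\<Sum>Y\<in>UNIV. a.proj X B2 (\<beta> B (c.proj Y B y)))"
    unfolding eq1
    by (rule lin_on_sum[OF a.proj_lin a.Sp_sub finite_itype _ a.mod]) (use bS c.proj_Sp yS in blast)
  also have "\<dots> = a.proj X B2 (\<beta> B (c.proj X B y))"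
  proof -
    have z: "a.proj X B2 (\<beta> B (c.proj Y B y)) = 0" if Y: "Y \<noteq> X" for Y
    proof -
      consider "hz X Y" | "hz Y X" using hz_or Y by metis
      then show ?thesis
      proof cases
        case 1
        have "c.proj Y (lam e b) (\<alpha> b x) = 0"
          by (rule vanish[OF A C proj_morph[OF A C al] 1 x])
        then have "c.proj Y B y = 0" unfolding y_def B_def .
        moreover have "\<beta> B 0 = 0" using lin_on_zero[OF morph_lin[OF be] c.subspace_0[OF c.Sp_sub]] .
        ultimately show ?thesis using a.proj_zero by simp
      next
        case 2
        have inP: "c.proj Y B y \<in> c.P Y B" using c.proj_in[OF yS] .
        show ?thesis
          using vanish[OF C A proj_morph[OF C A be] 2 inP] unfolding B2_def .
      qed
    qed
    have "(\<Sum>Y\<in>UNIV. a.proj X B2 (\<beta> B (c.proj Y B y)))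
       = a.proj X B2 (\<beta> B (c.proj X B y)) + (\<Sum>Y\<in>UNIV - {X}. a.proj X B2 (\<beta> B (c.proj Y B y)))"
      by (rule sum.remove) auto
    also have "(\<Sum>Y\<in>UNIV - {X}. a.proj X B2 (\<beta> B (c.proj Y B y))) = 0"
      by (rule sum.neutral) (use z in blast)
    finally show ?thesis by simp
  qed
  finally have eq2: "a.proj X B2 (\<beta> B y) = a.proj X B2 (\<beta> B (c.proj X B y))" .
  have "\<beta> B y = Mp1 b B2 x" using h xS unfolding y_def B_def B2 by blast
  moreover have "Mp1 b B2 x \<in> a.P X B2"
    using a.P_Mp[OF _ x] ble_self_lam[of "2 * e" b] e unfolding B2 by simp
  ultimately have "a.proj X B2 (\<beta> B y) = Mp1 b B2 x" using a.proj_id by simp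
  then show ?thesis using eq2 unfolding y_def B2_def B_def B2[unfolded B2_def B_def] by simp
qed



lemma asm_morph:
  assumes A: "dmod s1 Sp1 Mp1 J1 N1 Iv1" and C: "dmod s2 Sp2 Mp2 J2 N2 Iv2"
    and a: "\<And>X. morph s1 (partSp s1 J1 N1 Iv1 X) Mp1 s2 (shSp e (partSp s2 J2 N2 Iv2 X)) (shMp e Mp2) (a X)"
  shows "morph s1 Sp1 Mp1 s2 (shSp e Sp2) (shMp e Mp2)
     (\<lambda>b x. \<Sum>X\<in>UNIV. a X b (dmod.proj s1 J1 N1 Iv1 X b x))"
proof -
  interpret a: dmod s1 Sp1 Mp1 J1 N1 Iv1 by (rule A)
  interpret c: dmod s2 Sp2 Mp2 J2 N2 Iv2 by (rule C)
  have aP: "x \<in> Sp1 b \<Longrightarrow> a X b (a.proj X b x) \<in> c.P X (lam e b)" for x b X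
    using morph_in[OF a a.proj_in] unfolding shSp_def by blast
  have aS: "x \<in> Sp1 b \<Longrightarrow> a X b (a.proj X b x) \<in> Sp2 (lam e b)" for x b X
    using aP c.P_Sp by blast
  show ?thesis
  proof (rule morphI)
    fix b
    show "lin_on s1 s2 (Sp1 b) (\<lambda>x. \<Sum>X\<in>UNIV. a X b (a.proj X b x))"
    proof (rule lin_onI)
      fix x y assume x: "x \<in> Sp1 b" and y: "y \<in> Sp1 b"
      have "a X b (a.proj X b (x + y)) = a X b (a.proj X b x) + a X b (a.proj X b y)" for X
      proof -
        have "a.proj X b (x + y) = a.proj X b x + a.proj X b y" using lin_add[OF a.proj_lin x y] .
        then show ?thesis using lin_add[OF morph_lin[OF a] a.proj_in[OF x] a.proj_in[OF y]] by simp
      qed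
      then show "(\<Sum>X\<in>UNIV. a X b (a.proj X b (x + y))) = (\<Sum>X\<in>UNIV. a X b (a.proj X b x)) + (\<Sum>X\<in>UNIV. a X b (a.proj X b y))"
        by (simp add: sum.distrib)
    next
      fix k x assume x: "x \<in> Sp1 b"
      have "a X b (a.proj X b (s1 k x)) = s2 k (a X b (a.proj X b x))" for X
      proof -
        have "a.proj X b (s1 k x) = s1 k (a.proj X b x)" using lin_scale[OF a.proj_lin x] .
        then show ?thesis using lin_scale[OF morph_lin[OF a] a.proj_in[OF x]] by simp
      qed
      then show "(\<Sum>X\<in>UNIV. a X b (a.proj X b (s1 k x))) = s2 k (\<Sum>X\<in>UNIV. a X b (a.proj X b x))"
        by (simp add: c.scale_sum_right)
    qed
  next
    fix b x assume x: "x \<in> Sp1 b"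
    show "(\<Sum>X\<in>UNIV. a X b (a.proj X b x)) \<in> shSp e Sp2 b"
      unfolding shSp_def by (rule c.subspace_sum[OF c.Sp_sub]) (use aS x in blast)
  next
    fix b b' x assume bb: "ble b b'" and x: "x \<in> Sp1 b"
    have "a X b' (a.proj X b' (Mp1 b b' x)) = Mp2 (lam e b) (lam e b') (a X b (a.proj X b x))" for X
    proof -
      have "a.proj X b' (Mp1 b b' x) = Mp1 b b' (a.proj X b x)" using a.proj_nat[OF bb x] by simp
      then show ?thesis using morph_nat[OF a bb a.proj_in[OF x]] unfolding shMp_def by simp
    qed
    then have "(\<Sum>X\<in>UNIV. a X b' (a.proj X b' (Mp1 b b' x)))
        = (\<Sum>X\<in>UNIV. Mp2 (lam e b) (lam e b') (a X b (a.proj X b x)))" by simp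
    also have "\<dots> = Mp2 (lam e b) (lam e b') (\<Sum>X\<in>UNIV. a X b (a.proj X b x))"
      by (rule lin_on_sum[OF c.Mp_lin[OF ble_lam[OF bb]] c.Sp_sub finite_itype _ c.mod, symmetric])
        (use aS x in blast)
    finally show "(\<Sum>X\<in>UNIV. a X b' (a.proj X b' (Mp1 b b' x)))
        = shMp e Mp2 b b' (\<Sum>X\<in>UNIV. a X b (a.proj X b x))" unfolding shMp_def .
  qed
qed

lemma asm_comp:
  assumes A: "dmod s1 Sp1 Mp1 J1 N1 Iv1" and C: "dmod s2 Sp2 Mp2 J2 N2 Iv2"
    and a: "\<And>X. morph s1 (partSp s1 J1 N1 Iv1 X) Mp1 s2 (shSp e (partSp s2 J2 N2 Iv2 X)) (shMp e Mp2) (a X)"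
    and bb: "\<And>X. morph s2 (partSp s2 J2 N2 Iv2 X) Mp2 s1 (shSp e (partSp s1 J1 N1 Iv1 X)) (shMp e Mp1) (bb X)"
    and e: "e \<ge> 0"
    and h: "\<And>X b x. x \<in> partSp s1 J1 N1 Iv1 X b \<Longrightarrow> bb X (lam e b) (a X b x) = Mp1 b (lam (2 * e) b) x"
    and x: "x \<in> Sp1 b"
  shows "(\<lambda>b y. \<Sum>X\<in>UNIV. bb X b (dmod.proj s2 J2 N2 Iv2 X b y)) (lam e b)
           ((\<lambda>b x. \<Sum>X\<in>UNIV. a X b (dmod.proj s1 J1 N1 Iv1 X b x)) b x) = Mp1 b (lam (2 * e) b) x"
proof -
  interpret a: dmod s1 Sp1 Mp1 J1 N1 Iv1 by (rule A)
  interpret c: dmod s2 Sp2 Mp2 J2 N2 Iv2 by (rule C)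
  have aP: "\<forall>X. a X b (a.proj X b x) \<in> c.P X (lam e b)"
    using morph_in[OF a a.proj_in[OF x]] unfolding shSp_def by blast
  have pr: "c.proj X (lam e b) (\<Sum>Y\<in>UNIV. a Y b (a.proj Y b x)) = a X b (a.proj X b x)" for X
    using c.proj_char[OF aP] .
  have bl: "ble b (lam (2 * e) b)" using ble_self_lam e by simp
  have "(\<Sum>X\<in>UNIV. bb X (lam e b) (c.proj X (lam e b) (\<Sum>Y\<in>UNIV. a Y b (a.proj Y b x))))
      = (\<Sum>X\<in>UNIV. Mp1 b (lam (2 * e) b) (a.proj X b x))"
    using pr h a.proj_in[OF x] by simp
  also have "\<dots> = Mp1 b (lam (2 * e) b) (\<Sum>X\<in>UNIV. a.proj X b x)"
    by (rule lin_on_sum[OF a.Mp_lin[OF bl] a.Sp_sub finite_itype _ a.mod, symmetric])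
      (use a.proj_Sp x in blast)
  also have "\<dots> = Mp1 b (lam (2 * e) b) x" using a.proj_sum[OF x] by simp
  finally show ?thesis by simp
qed

lemma dmodI: "pfd s Sp Mp \<Longrightarrow> interval_decomp s Sp Mp J N Iv \<Longrightarrow> dmod s Sp Mp J N Iv"
  unfolding dmod_def pfd_def by blast

theorem proposition4p6:
  fixes s1 :: "'k::field \<Rightarrow> 'v::ab_group_add \<Rightarrow> 'v"
    and s2 :: "'k \<Rightarrow> 'w::ab_group_add \<Rightarrow> 'w"
    and SpV :: "bpt \<Rightarrow> 'v set" and MpV :: "bpt \<Rightarrow> bpt \<Rightarrow> 'v \<Rightarrow> 'v"
    and SpW :: "bpt \<Rightarrow> 'w set" and MpW :: "bpt \<Rightarrow> bpt \<Rightarrow> 'w \<Rightarrow> 'w"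
    and J :: "'j set" and N :: "'j \<Rightarrow> bpt \<Rightarrow> 'v set" and IvV :: "'j \<Rightarrow> bpt set"
    and K :: "'i set" and M :: "'i \<Rightarrow> bpt \<Rightarrow> 'w set" and IvW :: "'i \<Rightarrow> bpt set"
    and e :: real
  assumes "pfd s1 SpV MpV" and "pfd s2 SpW MpW"
    and "interval_decomp s1 SpV MpV J N IvV"
    and "interval_decomp s2 SpW MpW K M IvW"
    and "e \<ge> 0"
  shows "interleaved e s1 SpV MpV s2 SpW MpW \<longleftrightarrow>
    (\<forall>X. interleaved e s1 (partSp s1 J N IvV X) MpV s2 (partSp s2 K M IvW X) MpW)"
proof
  have A: "dmod s1 SpV MpV J N IvV" using dmodI assms(1,3) .
  have C: "dmod s2 SpW MpW K M IvW" using dmodI assms(2,4) .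
  {
    assume "interleaved e s1 SpV MpV s2 SpW MpW"
    then obtain \<alpha> \<beta> where al: "morph s1 SpV MpV s2 (shSp e SpW) (shMp e MpW) \<alpha>"
      and be: "morph s2 SpW MpW s1 (shSp e SpV) (shMp e MpV) \<beta>"
      and h1: "\<forall>b. \<forall>x\<in>SpV b. \<beta> (lam e b) (\<alpha> b x) = MpV b (lam (2 * e) b) x"
      and h2: "\<forall>b. \<forall>y\<in>SpW b. \<alpha> (lam e b) (\<beta> b y) = MpW b (lam (2 * e) b) y"
      unfolding interleaved_def by blast
    show "\<forall>X. interleaved e s1 (partSp s1 J N IvV X) MpV s2 (partSp s2 K M IvW X) MpW"
    proof
      fix X
      show "interleaved e s1 (partSp s1 J N IvV X) MpV s2 (partSp s2 K M IvW X) MpW"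
        unfolding interleaved_def
      proof (intro exI conjI)
        show "morph s1 (partSp s1 J N IvV X) MpV s2 (shSp e (partSp s2 K M IvW X)) (shMp e MpW)
           (\<lambda>b x. dmod.proj s2 K M IvW X (lam e b) (\<alpha> b x))"
          by (rule proj_morph[OF A C al])
        show "morph s2 (partSp s2 K M IvW X) MpW s1 (shSp e (partSp s1 J N IvV X)) (shMp e MpV)
           (\<lambda>b x. dmod.proj s1 J N IvV X (lam e b) (\<beta> b x))"
          by (rule proj_morph[OF C A be])
        show "\<forall>b. \<forall>x\<in>partSp s1 J N IvV X b.
           dmod.proj s1 J N IvV X (lam e (lam e b)) (\<beta> (lam e b) (dmod.proj s2 K M IvW X (lam e b) (\<alpha> b x)))
             = MpV b (lam (2 * e) b) x"
          using comp1[OF A C al be assms(5) h1] by blast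
        show "\<forall>b. \<forall>y\<in>partSp s2 K M IvW X b.
           dmod.proj s2 K M IvW X (lam e (lam e b)) (\<alpha> (lam e b) (dmod.proj s1 J N IvV X (lam e b) (\<beta> b y)))
             = MpW b (lam (2 * e) b) y"
          using comp1[OF C A be al assms(5) h2] by blast
      qed
    qed
  }
  {
    assume h: "\<forall>X. interleaved e s1 (partSp s1 J N IvV X) MpV s2 (partSp s2 K M IvW X) MpW"
    have "\<forall>X. \<exists>ab. morph s1 (partSp s1 J N IvV X) MpV s2 (shSp e (partSp s2 K M IvW X)) (shMp e MpW) (fst ab)
         \<and> morph s2 (partSp s2 K M IvW X) MpW s1 (shSp e (partSp s1 J N IvV X)) (shMp e MpV) (snd ab)
         \<and> (\<forall>b. \<forall>x\<in>partSp s1 J N IvV X b. snd ab (lam e b) (fst ab b x) = MpV b (lam (2 * e) b) x)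
         \<and> (\<forall>b. \<forall>y\<in>partSp s2 K M IvW X b. fst ab (lam e b) (snd ab b y) = MpW b (lam (2 * e) b) y)"
    proof
      fix X
      obtain \<alpha> \<beta> where "morph s1 (partSp s1 J N IvV X) MpV s2 (shSp e (partSp s2 K M IvW X)) (shMp e MpW) \<alpha>
         \<and> morph s2 (partSp s2 K M IvW X) MpW s1 (shSp e (partSp s1 J N IvV X)) (shMp e MpV) \<beta>
         \<and> (\<forall>b. \<forall>x\<in>partSp s1 J N IvV X b. \<beta> (lam e b) (\<alpha> b x) = MpV b (lam (2 * e) b) x)
         \<and> (\<forall>b. \<forall>y\<in>partSp s2 K M IvW X b. \<alpha> (lam e b) (\<beta> b y) = MpW b (lam (2 * e) b) y)"
        using h unfolding interleaved_def by blast
      then show "\<exists>ab. morph s1 (partSp s1 J N IvV X) MpV s2 (shSp e (partSp s2 K M IvW X)) (shMp e MpW) (fst ab)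
         \<and> morph s2 (partSp s2 K M IvW X) MpW s1 (shSp e (partSp s1 J N IvV X)) (shMp e MpV) (snd ab)
         \<and> (\<forall>b. \<forall>x\<in>partSp s1 J N IvV X b. snd ab (lam e b) (fst ab b x) = MpV b (lam (2 * e) b) x)
         \<and> (\<forall>b. \<forall>y\<in>partSp s2 K M IvW X b. fst ab (lam e b) (snd ab b y) = MpW b (lam (2 * e) b) y)"
        by (intro exI[of _ "(\<alpha>, \<beta>)"]) simp
    qed
    then obtain ab where ab: "\<And>X. morph s1 (partSp s1 J N IvV X) MpV s2 (shSp e (partSp s2 K M IvW X)) (shMp e MpW) (fst (ab X))
         \<and> morph s2 (partSp s2 K M IvW X) MpW s1 (shSp e (partSp s1 J N IvV X)) (shMp e MpV) (snd (ab X))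
         \<and> (\<forall>b. \<forall>x\<in>partSp s1 J N IvV X b. snd (ab X) (lam e b) (fst (ab X) b x) = MpV b (lam (2 * e) b) x)
         \<and> (\<forall>b. \<forall>y\<in>partSp s2 K M IvW X b. fst (ab X) (lam e b) (snd (ab X) b y) = MpW b (lam (2 * e) b) y)"
      by metis
    define a where "a X = fst (ab X)" for X
    define bb where "bb X = snd (ab X)" for X
    have ma: "\<And>X. morph s1 (partSp s1 J N IvV X) MpV s2 (shSp e (partSp s2 K M IvW X)) (shMp e MpW) (a X)"
      using ab unfolding a_def by blast
    have mb: "\<And>X. morph s2 (partSp s2 K M IvW X) MpW s1 (shSp e (partSp s1 J N IvV X)) (shMp e MpV) (bb X)"
      using ab unfolding bb_def by blast
    have c1: "\<And>X b x. x \<in> partSp s1 J N IvV X b \<Longrightarrow> bb X (lam e b) (a X b x) = MpV b (lam (2 * e) b) x"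
      using ab unfolding a_def bb_def by blast
    have c2: "\<And>X b y. y \<in> partSp s2 K M IvW X b \<Longrightarrow> a X (lam e b) (bb X b y) = MpW b (lam (2 * e) b) y"
      using ab unfolding a_def bb_def by blast
    show "interleaved e s1 SpV MpV s2 SpW MpW"
      unfolding interleaved_def
    proof (intro exI conjI)
      show "morph s1 SpV MpV s2 (shSp e SpW) (shMp e MpW) (\<lambda>b x. \<Sum>X\<in>UNIV. a X b (dmod.proj s1 J N IvV X b x))"
        by (rule asm_morph[OF A C ma])
      show "morph s2 SpW MpW s1 (shSp e SpV) (shMp e MpV) (\<lambda>b x. \<Sum>X\<in>UNIV. bb X b (dmod.proj s2 K M IvW X b x))"
        by (rule asm_morph[OF C A mb])
      show "\<forall>b. \<forall>x\<in>SpV b. (\<lambda>b y. \<Sum>X\<in>UNIV. bb X b (dmod.proj s2 K M IvW X b y)) (lam e b)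
           ((\<lambda>b x. \<Sum>X\<in>UNIV. a X b (dmod.proj s1 J N IvV X b x)) b x) = MpV b (lam (2 * e) b) x"
        using asm_comp[OF A C ma mb assms(5) c1] by blast
      show "\<forall>b. \<forall>y\<in>SpW b. (\<lambda>b x. \<Sum>X\<in>UNIV. a X b (dmod.proj s1 J N IvV X b x)) (lam e b)
           ((\<lambda>b y. \<Sum>X\<in>UNIV. bb X b (dmod.proj s2 K M IvW X b y)) b y) = MpW b (lam (2 * e) b) y"
        using asm_comp[OF C A mb ma assms(5) c2] by blast
    qed
  }
qed


end
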